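(* Let $f(x)=\frac1n\sum_{i=1}^nf_i(x)$ on $\mathbb{R}^d$ where each $f_i$ is convex and lower bounded, and let $x^*$ be a minimizer of $f$. Consider the stochastic subgradient method with the DecSPS-NS stepsize (defined in the context) with $c_k=c_0\sqrt{k+1}$ for some $c_0>0$. Then for every $K\ge1$, $$\mathbb{E}[f(\bar x^K)-f(x^* )]\le\frac{D^2/\gamma_\ell+2\gamma_bG^2}{\sqrt K},$$ where $\bar x^K=\frac1K\sum_{k=0}^{K-1}x^k$, $D^2:=\max_{k\in[K-1]}\|x^k-x^*\|^2$ and $G^2:=\max_{k\in[K-1]}\|g_{\mathcal S_k}(x^k)\|^2$.
   Context: Minibatches: fix a batch size $B$; at each iteration a subset $\mathcal S_k\subseteq[n]$, $|\mathcal S_k|=B$, is sampled uniformly at random, independently across iterations. For $\mathcal S\subseteq[n]$, $f_{\mathcal S}:=\frac1{|\mathcal S|}\sum_{i\in\mathcal S}f_i$, $f^*_{\mathcal S}:=\inf_xf_{\mathcal S}(x)$, $\ell^*_{\mathcal S}$ is a given real number with $\ell^*_{\mathcal S}\le f^*_{\mathcal S}$, and $g_{\mathcal S}(x)$ is a subgradient of $f_{\mathcal S}$ at $x$. Method: $x^{k+1}=x^k-\gamma_kg_{\mathcal S_k}(x^k)$. DecSPS-NS stepsize: $\gamma_k:=\frac1{c_k}\min\left\{\max\left\{c_0\gamma_\ell,\ \frac{f_{\mathcal S_k}(x^k)-\ell^*_{\mathcal S_k}}{\|g_{\mathcal S_k}(x^k)\|^2}\right\},\ c_{k-1}\gamma_{k-1}\right\}$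 for $k\ge0$, with $c_{-1}=c_0$, $\gamma_{-1}=\gamma_b$, where $0<\gamma_\ell\le\gamma_b$ are fixed constants. $[K-1]$ denotes $\{0,\dots,K-1\}$. *)

theory Defs
  imports "HOL-Analysis.Analysis" "HOL-Probability.Probability"
begin

definition fS :: "(nat \<Rightarrow> 'a \<Rightarrow> real) \<Rightarrow> nat set \<Rightarrow> 'a \<Rightarrow> real" where
  "fS fs S x = (\<Sum>i\<in>S. fs i x) / real (card S)"

definition batches :: "nat \<Rightarrow> nat \<Rightarrow> nat set set" where
  "batches n B = {S. S \<subseteq> {..<n} \<and> card S = B}"

definition is_subgradient :: "('a::real_inner \<Rightarrow> real) \<Rightarrow> 'a \<Rightarrow> 'a \<Rightarrow> bool" where
  "is_subgradient F x v \<longleftrightarrow> (\<forall>y. F x + inner v (y - x) \<le> F y)"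

text \<open>The clipped Polyak quantity min(max(c_0 gamma_l, (F_S(x)-l_S)/||g||^2), p),
  where p = c_{k-1} gamma_{k-1}; then gamma_k = (this)/c_k.\<close>
definition decsps_m ::
  "(nat set \<Rightarrow> 'a::real_normed_vector \<Rightarrow> real) \<Rightarrow> (nat set \<Rightarrow> real) \<Rightarrow> (nat set \<Rightarrow> 'a \<Rightarrow> 'a)
   \<Rightarrow> (nat \<Rightarrow> real) \<Rightarrow> real \<Rightarrow> nat set \<Rightarrow> 'a \<Rightarrow> real \<Rightarrow> real" where
  "decsps_m F l g c \<gamma>l S x p =
     min (max (c 0 * \<gamma>l) ((F S x - l S) / (norm (g S x))\<^sup>2)) p"

text \<open>State after k steps: (x^k, c_{k-1} gamma_{k-1}), with c_{-1} gamma_{-1} = c_0 gamma_b.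
  The argument w is the sequence of sampled minibatches S_0, S_1, ...\<close>
fun decsps_state ::
  "(nat set \<Rightarrow> 'a::real_normed_vector \<Rightarrow> real) \<Rightarrow> (nat set \<Rightarrow> real) \<Rightarrow> (nat set \<Rightarrow> 'a \<Rightarrow> 'a)
   \<Rightarrow> (nat \<Rightarrow> real) \<Rightarrow> real \<Rightarrow> real \<Rightarrow> 'a \<Rightarrow> (nat \<Rightarrow> nat set) \<Rightarrow> nat \<Rightarrow> 'a \<times> real" where
  "decsps_state F l g c \<gamma>l \<gamma>b x0 w 0 = (x0, c 0 * \<gamma>b)"
| "decsps_state F l g c \<gamma>l \<gamma>b x0 w (Suc k) =
     (let (x, p) = decsps_state F l g c \<gamma>l \<gamma>b x0 w k;
          m = decsps_m F l g c \<gamma>l (w k) x p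
      in (x - (m / c k) *\<^sub>R g (w k) x, m))"

definition decsps_x ::
  "(nat set \<Rightarrow> 'a::real_normed_vector \<Rightarrow> real) \<Rightarrow> (nat set \<Rightarrow> real) \<Rightarrow> (nat set \<Rightarrow> 'a \<Rightarrow> 'a)
   \<Rightarrow> (nat \<Rightarrow> real) \<Rightarrow> real \<Rightarrow> real \<Rightarrow> 'a \<Rightarrow> (nat \<Rightarrow> nat set) \<Rightarrow> nat \<Rightarrow> 'a" where
  "decsps_x F l g c \<gamma>l \<gamma>b x0 w k = fst (decsps_state F l g c \<gamma>l \<gamma>b x0 w k)"

end

theory Submission
  imports Defs
begin


lemma state_dep:
  "(\<forall>j<k. w j = w' j) \<Longrightarrow> decsps_state F l g c \<gamma>l \<gamma>b x0 w k = decsps_state F l g c \<gamma>l \<gamma>b x0 w' k"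
  by (induction k) (auto simp: Let_def split_beta)

lemma state_Suc:
  "decsps_state F l g c \<gamma>l \<gamma>b x0 w (Suc k) =
    (let s = decsps_state F l g c \<gamma>l \<gamma>b x0 w k; m = decsps_m F l g c \<gamma>l (w k) (fst s) (snd s)
     in (fst s - (m / c k) *\<^sub>R g (w k) (fst s), m))"
  by (simp add: Let_def split_beta)

lemma snd_Suc:
  "snd (decsps_state F l g c \<gamma>l \<gamma>b x0 w (Suc k)) = decsps_m F l g c \<gamma>l (w k)
     (fst (decsps_state F l g c \<gamma>l \<gamma>b x0 w k)) (snd (decsps_state F l g c \<gamma>l \<gamma>b x0 w k))"
  by (simp add: Let_def split_beta)

lemma fst_Suc:
  "fst (decsps_state F l g c \<gamma>l \<gamma>b x0 w (Suc k)) = fst (decsps_state F l g c \<gamma>l \<gamma>b x0 w k)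
     - (snd (decsps_state F l g c \<gamma>l \<gamma>b x0 w (Suc k)) / c k) *\<^sub>R g (w k) (fst (decsps_state F l g c \<gamma>l \<gamma>b x0 w k))"
  by (simp add: Let_def split_beta)

lemma m_bounds:
  assumes "c 0 * \<gamma>l \<le> p"
  shows "c 0 * \<gamma>l \<le> decsps_m F l g c \<gamma>l S x p \<and> decsps_m F l g c \<gamma>l S x p \<le> p"
  using assms unfolding decsps_m_def by linarith

lemma state_bounds1:
  assumes "\<gamma>l \<le> \<gamma>b" "0 \<le> c 0"
  shows "c 0 * \<gamma>l \<le> snd (decsps_state F l g c \<gamma>l \<gamma>b x0 w k) \<and> snd (decsps_state F l g c \<gamma>l \<gamma>b x0 w k) \<le> c 0 * \<gamma>b"
proof (induction k)
  case 0
  then show ?case using assms by (auto simp: mult_left_mono)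
next
  case (Suc k)
  then show ?case using m_bounds[of c \<gamma>l "snd (decsps_state F l g c \<gamma>l \<gamma>b x0 w k)" F l g "w k"
     "fst (decsps_state F l g c \<gamma>l \<gamma>b x0 w k)"] unfolding snd_Suc by linarith
qed

lemma state_bounds2:
  assumes "\<gamma>l \<le> \<gamma>b" "0 \<le> c 0"
  shows "snd (decsps_state F l g c \<gamma>l \<gamma>b x0 w (Suc k)) \<le> snd (decsps_state F l g c \<gamma>l \<gamma>b x0 w k)"
  using m_bounds[of c \<gamma>l "snd (decsps_state F l g c \<gamma>l \<gamma>b x0 w k)" F l g "w k"
     "fst (decsps_state F l g c \<gamma>l \<gamma>b x0 w k)"] state_bounds1[of \<gamma>l \<gamma>b c F l g x0 w k] assms unfolding snd_Suc by blast

lemma telesc: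
  fixes r a :: "nat \<Rightarrow> real"
  assumes "\<And>k. r k \<le> r (Suc k)" "\<And>k. 0 \<le> r k" "\<forall>k<K. a k \<le> M" "1 \<le> K"
  shows "(\<Sum>k<K. r k * (a k - a (Suc k))) \<le> r (K - 1) * (M - a K)"
  using assms(3,4)
proof (induction K)
  case 0 then show ?case by simp
next
  case (Suc K)
  show ?case
  proof (cases "K = 0")
    case True
    then show ?thesis using Suc.prems assms(2)[of 0] by (simp add: mult_left_mono)
  next
    case False
    then have IH: "(\<Sum>k<K. r k * (a k - a (Suc k))) \<le> r (K - 1) * (M - a K)" using Suc by auto
    have "M - a K \<ge> 0" using Suc.prems by auto
    moreover have "r (K - 1) \<le> r K" using assms(1)[of "K-1"] False by simp
    ultimately have "r (K - 1) * (M - a K) \<le> r K * (M - a K)" by (simp add: mult_right_mono)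
    then show ?thesis using IH by (simp add: algebra_simps)
  qed
qed

lemma sqrt_sum: "(\<Sum>k<K. 1 / sqrt (real k + 1)) \<le> 2 * sqrt (real K)"
proof (induction K)
  case 0 then show ?case by simp
next
  case (Suc K)
  have a: "sqrt (real K) * sqrt (real K + 1) \<le> real K + 1/2"
  proof -
    have "(sqrt (real K) * sqrt (real K + 1))^2 = real K * (real K + 1)"
      by (simp add: power_mult_distrib)
    also have "\<dots> \<le> (real K + 1/2)^2" by (simp add: power2_eq_square algebra_simps)
    finally show ?thesis by (rule power2_le_imp_le) simp
  qed
  have p: "sqrt (real K + 1) > 0" by simp
  have "2 * sqrt (real K) + 1 / sqrt (real K + 1) \<le> 2 * sqrt (real K + 1)"
  proof -
    have "(2 * sqrt (real K) + 1 / sqrt (real K + 1)) * sqrt (real K + 1)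
        = 2 * (sqrt (real K) * sqrt (real K + 1)) + 1" using p by (simp add: field_simps)
    also have "\<dots> \<le> 2 * (real K + 1)"
    proof -
      have "\<forall>z. z \<le> real K + 1/2 \<longrightarrow> 2*z+1 \<le> 2*(real K+1)" by simp
      then show ?thesis using a by blast
    qed
    also have "\<dots> = 2 * sqrt (real K + 1) * sqrt (real K + 1)" by (simp add: mult.assoc)
    finally show ?thesis using p by (meson mult_le_cancel_right_pos)
  qed
  then show ?case using Suc by (simp add: add.commute)
qed



lemma batches_finite: "finite (batches n B)"
  unfolding batches_def by (rule finite_subset[of _ "Pow {..<n}"]) auto

lemma card_batches: "card (batches n B) = n choose B"
  unfolding batches_def using n_subsets[of "{..<n}" B] by simp

lemma batches_ne: "B \<le> n \<Longrightarrow> batches n B \<noteq> {}"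
  unfolding batches_def proof -
  assume "B \<le> n"
  then have "{..<B} \<in> {S. S \<subseteq> {..<n} \<and> card S = B}" by auto
  then show "{S. S \<subseteq> {..<n} \<and> card S = B} \<noteq> {}" by blast
qed

lemma card_batches_with:
  assumes "i < n" "1 \<le> B"
  shows "card {S\<in>batches n B. i \<in> S} = (n - 1) choose (B - 1)"
proof -
  have img: "(\<lambda>S. S - {i}) ` {S\<in>batches n B. i \<in> S} = {T. T \<subseteq> {..<n} - {i} \<and> card T = B - 1}"
  proof (intro equalityI subsetI)
    fix T assume "T \<in> (\<lambda>S. S - {i}) ` {S\<in>batches n B. i \<in> S}"
    then obtain S where "S \<in> batches n B" "i \<in> S" "T = S - {i}" by auto
    moreover have "finite S" using \<open>S \<in> batches n B\<close> unfolding batches_def by (auto intro: finite_subset)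
    ultimately show "T \<in> {T. T \<subseteq> {..<n} - {i} \<and> card T = B - 1}" unfolding batches_def by auto
  next
    fix T assume T: "T \<in> {T. T \<subseteq> {..<n} - {i} \<and> card T = B - 1}"
    then have fT: "finite T" by (auto intro: finite_subset)
    have "i \<notin> T" using T by auto
    then have "card (insert i T) = B" using T fT assms by simp
    moreover have "insert i T \<subseteq> {..<n}" using T assms by auto
    ultimately have "insert i T \<in> {S\<in>batches n B. i \<in> S}" unfolding batches_def by blast
    moreover have "T = insert i T - {i}" using T by auto
    ultimately show "T \<in> (\<lambda>S. S - {i}) ` {S\<in>batches n B. i \<in> S}" by blast
  qed
  have inj: "inj_on (\<lambda>S. S - {i}) {S\<in>batches n B. i \<in> S}"
  proof (rule inj_onI)
    fix S S' assume "S \<in> {S\<in>batches n B. i \<in> S}" "S' \<in> {S\<in>batches n B. i \<in> S}" "S - {i} = S' - {i}"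
    then have "i \<in> S" "i \<in> S'" "S - {i} = S' - {i}" by auto
    then have "insert i (S - {i}) = insert i (S' - {i})" by simp
    then show "S = S'" using \<open>i \<in> S\<close> \<open>i \<in> S'\<close> by (simp add: insert_absorb)
  qed
  have "card {S\<in>batches n B. i \<in> S} = card {T. T \<subseteq> {..<n} - {i} \<and> card T = B - 1}"
    using card_image[OF inj] unfolding img by simp
  also have "\<dots> = card ({..<n} - {i}) choose (B - 1)" by (rule n_subsets) simp
  also have "card ({..<n} - {i}) = n - 1" using assms by simp
  finally show ?thesis .
qed

lemma avg_batches:
  assumes "1 \<le> B" "B \<le> n"
  shows "(\<Sum>S\<in>batches n B. fS fs S x) = real (card (batches n B)) * fS fs {..<n} x"
proof -
  have fin: "\<And>S. S \<in> batches n B \<Longrightarrow> S \<subseteq> {..<n} \<and> card S = B" unfolding batches_def by auto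
  have "(\<Sum>S\<in>batches n B. fS fs S x) = (\<Sum>S\<in>batches n B. \<Sum>i<n. (if i \<in> S then fs i x else 0)) / real B"
  proof -
    have "fS fs S x = (\<Sum>i<n. if i \<in> S then fs i x else 0) / real B" if "S \<in> batches n B" for S
    proof -
      have "S \<subseteq> {..<n}" "card S = B" using fin that by auto
      then show ?thesis unfolding fS_def by (simp add: sum.If_cases Int_absorb1 Int_absorb2)
    qed
    then show ?thesis by (simp add: sum_divide_distrib)
  qed
  also have "(\<Sum>S\<in>batches n B. \<Sum>i<n. (if i \<in> S then fs i x else 0))
      = (\<Sum>i<n. fs i x * real (card {S\<in>batches n B. i \<in> S}))"
    by (subst sum.swap) (simp add: sum.inter_filter[OF batches_finite, symmetric] mult.commute)
  also have "\<dots> = (\<Sum>i<n. fs i x * real ((n - 1) choose (B - 1)))"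
    by (rule sum.cong[OF refl]) (metis lessThan_iff card_batches_with assms(1))
  also have "\<dots> = (\<Sum>i<n. fs i x) * real ((n - 1) choose (B - 1))"
    by (simp add: sum_distrib_right)
  finally have e1: "(\<Sum>S\<in>batches n B. fS fs S x) = (\<Sum>i<n. fs i x) * real ((n - 1) choose (B - 1)) / real B" .
  obtain m b where mb: "n = Suc m" "B = Suc b" using assms by (cases n; cases B) auto
  have "real (Suc m) * real (m choose b) = real (Suc m choose Suc b) * real (Suc b)"
    using Suc_times_binomial_eq[of m b] by (simp only: of_nat_mult[symmetric])
  then have e2: "real ((n - 1) choose (B - 1)) / real B = real (n choose B) / real n"
    using mb by (simp add: field_simps)
  have "(\<Sum>i<n. fs i x) * real ((n - 1) choose (B - 1)) / real B
     = (\<Sum>i<n. fs i x) * (real ((n - 1) choose (B - 1)) / real B)" by simp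
  also have "\<dots> = real (n choose B) * ((\<Sum>i<n. fs i x) / real n)" unfolding e2 by simp
  finally have e3: "(\<Sum>i<n. fs i x) * real ((n - 1) choose (B - 1)) / real B = real (n choose B) * ((\<Sum>i<n. fs i x) / real n)" .
  have e4: "fS fs {..<n} x = (\<Sum>i<n. fs i x) / real n" by (simp add: fS_def)
  show ?thesis unfolding e1 card_batches e4 e3 ..
qed


lemma swap_coord:
  fixes \<Phi> :: "'b \<Rightarrow> ('a \<Rightarrow> 'b) \<Rightarrow> real"
  assumes "k \<in> I" "finite A"
    and dep: "\<And>S w w'. (\<forall>j\<in>I-{k}. w j = w' j) \<Longrightarrow> \<Phi> S w = \<Phi> S w'"
  shows "(\<Sum>w\<in>PiE I (\<lambda>_. A). \<Phi> (w k) w) * real (card A) = (\<Sum>w\<in>PiE I (\<lambda>_. A). \<Sum>S\<in>A. \<Phi> S w)"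
proof -
  define J where "J = I - {k}"
  have I: "I = insert k J" "k \<notin> J" using assms(1) J_def by auto
  let ?h = "\<lambda>(y::'b, g::'a\<Rightarrow>'b). g(k := y)"
  have P: "PiE I (\<lambda>_. A) = ?h ` (A \<times> PiE J (\<lambda>_. A))" unfolding I(1) by (rule PiE_insert_eq)
  have inj: "inj_on ?h (A \<times> PiE J (\<lambda>_. A))" using inj_combinator[OF I(2), of "\<lambda>_. A"] by simp
  have sumP: "\<And>F. (\<Sum>w\<in>PiE I (\<lambda>_. A). F w) = (\<Sum>(y,g)\<in>A \<times> PiE J (\<lambda>_. A). F (g(k:=y)))"
    unfolding P by (subst sum.reindex[OF inj]) (simp add: case_prod_beta)
  have d: "\<And>S y g. \<Phi> S (g(k:=y)) = \<Phi> S g" by (rule dep) (auto simp: J_def)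
  have "(\<Sum>w\<in>PiE I (\<lambda>_. A). \<Phi> (w k) w) = (\<Sum>y\<in>A. \<Sum>g\<in>PiE J (\<lambda>_. A). \<Phi> y g)"
    unfolding sumP by (simp add: d sum.cartesian_product[symmetric])
  moreover have "(\<Sum>w\<in>PiE I (\<lambda>_. A). \<Sum>S\<in>A. \<Phi> S w) = (\<Sum>y\<in>A. \<Sum>g\<in>PiE J (\<lambda>_. A). \<Sum>S\<in>A. \<Phi> S g)"
    unfolding sumP by (simp add: d sum.cartesian_product[symmetric])
  moreover have "(\<Sum>y\<in>A. \<Sum>g\<in>PiE J (\<lambda>_. A). \<Phi> y g) = (\<Sum>g\<in>PiE J (\<lambda>_. A). \<Sum>y\<in>A. \<Phi> y g)"
    by (rule sum.swap)
  moreover have "(\<Sum>y\<in>A. \<Sum>g\<in>PiE J (\<lambda>_. A). \<Sum>S\<in>A. \<Phi> S g) = real (card A) * (\<Sum>g\<in>PiE J (\<lambda>_. A). \<Sum>S\<in>A. \<Phi> S g)"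
    by simp
  ultimately show ?thesis by (simp only: mult.commute)
qed



lemma norm_step:
  fixes y v z :: "'a::real_inner"
  shows "(norm (y - t *\<^sub>R v - z))\<^sup>2 = (norm (y - z))\<^sup>2 - 2 * t * inner v (y - z) + t\<^sup>2 * (norm v)\<^sup>2"
proof -
  define u where "u = y - z"
  have e: "y - t *\<^sub>R v - z = u - t *\<^sub>R v" unfolding u_def by (simp add: algebra_simps)
  have "(norm (u - t *\<^sub>R v))\<^sup>2 = inner (u - t *\<^sub>R v) (u - t *\<^sub>R v)" by (rule power2_norm_eq_inner)
  also have "\<dots> = inner u u - 2 * t * inner v u + t\<^sup>2 * inner v v"
    by (simp add: inner_diff_left inner_diff_right inner_commute power2_eq_square algebra_simps)
  also have "\<dots> = (norm u)\<^sup>2 - 2 * t * inner v u + t\<^sup>2 * (norm v)\<^sup>2" by (simp only: power2_norm_eq_inner)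
  finally show ?thesis unfolding e u_def .
qed

lemma convex_on_sum_fun:
  assumes "finite I" "\<forall>i\<in>I. convex_on UNIV (f i)"
  shows "convex_on UNIV (\<lambda>x. \<Sum>i\<in>I. f i x)"
  using assms
proof (induction I rule: finite_induct)
  case empty then show ?case by (simp add: convex_on_const)
next
  case (insert i I)
  then show ?case by (simp add: convex_on_add)
qed



lemma pathwise:
  fixes F :: "nat set \<Rightarrow> 'a::real_inner \<Rightarrow> real" and g :: "nat set \<Rightarrow> 'a \<Rightarrow> 'a"
    and l :: "nat set \<Rightarrow> real" and x0 xstar :: 'a and w :: "nat \<Rightarrow> nat set" and c0 \<gamma>l \<gamma>b :: real and K :: nat
  assumes c0: "0 < c0" and gl: "0 < \<gamma>l" and glb: "\<gamma>l \<le> \<gamma>b" and K: "1 \<le> K"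
    and wA: "\<forall>k<K. w k \<in> A"
    and sg: "\<forall>S\<in>A. \<forall>x. is_subgradient (F S) x (g S x)"
  defines "c \<equiv> (\<lambda>k. c0 * sqrt (real k + 1))"
  defines "X \<equiv> (\<lambda>k. decsps_x F l g c \<gamma>l \<gamma>b x0 w k)"
  defines "D2 \<equiv> Max ((\<lambda>k. (norm (X k - xstar))\<^sup>2) ` {..<K})"
  defines "G2 \<equiv> Max ((\<lambda>k. (norm (g (w k) (X k)))\<^sup>2) ` {..<K})"
  shows "(\<Sum>k<K. F (w k) (X k) - F (w k) xstar) \<le> sqrt (real K) * (D2 / \<gamma>l + 2 * \<gamma>b * G2)"
proof -
  define p where "p k = snd (decsps_state F l g c \<gamma>l \<gamma>b x0 w k)" for k
  define \<gamma> where "\<gamma> k = p (Suc k) / c k" for k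
  define a where "a k = (norm (X k - xstar))\<^sup>2" for k
  define Gk where "Gk k = (norm (g (w k) (X k)))\<^sup>2" for k
  have c00: "c 0 = c0" unfolding c_def by simp
  have cpos: "c k > 0" for k unfolding c_def using c0 by simp
  have cmono: "c k \<le> c (Suc k)" for k unfolding c_def using c0 by simp
  have pb: "c0 * \<gamma>l \<le> p k \<and> p k \<le> c0 * \<gamma>b" for k
    using state_bounds1[of \<gamma>l \<gamma>b c F l g x0 w k] glb c0 unfolding p_def c00 by simp
  have pm: "p (Suc k) \<le> p k" for k
    using state_bounds2[of \<gamma>l \<gamma>b c F l g x0 w k] glb c0 unfolding p_def c00 by simp
  have ppos: "p k > 0" for k using pb[of k] c0 gl by (smt (verit) mult_pos_pos)
  have gpos: "\<gamma> k > 0" for k unfolding \<gamma>_def using ppos cpos by simp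
  have Xs: "X (Suc k) = X k - \<gamma> k *\<^sub>R g (w k) (X k)" for k
    unfolding X_def decsps_x_def \<gamma>_def p_def by (rule fst_Suc)
  have fin: "finite {..<K}" "{..<K} \<noteq> {}" using K by (auto simp: lessThan_empty_iff)
  have aD: "a k \<le> D2" if "k < K" for k unfolding a_def D2_def using that fin by (intro Max_ge) auto
  have GG: "Gk k \<le> G2" if "k < K" for k unfolding Gk_def G2_def using that fin by (intro Max_ge) auto
  have D2nn: "0 \<le> D2" using aD[of 0] K unfolding a_def by (smt (verit) zero_le_power2 less_le_trans zero_less_one)
  have G2nn: "0 \<le> G2" using GG[of 0] K unfolding Gk_def by (smt (verit) zero_le_power2 less_le_trans zero_less_one)
  have step: "2 * (F (w k) (X k) - F (w k) xstar) \<le> (1 / \<gamma> k) * (a k - a (Suc k)) + \<gamma> k * Gk k"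
    if "k < K" for k
  proof -
    have "is_subgradient (F (w k)) (X k) (g (w k) (X k))" using sg wA that by auto
    then have s: "F (w k) (X k) + inner (g (w k) (X k)) (xstar - X k) \<le> F (w k) xstar"
      unfolding is_subgradient_def by blast
    have i: "inner (g (w k) (X k)) (xstar - X k) = - inner (g (w k) (X k)) (X k - xstar)"
      by (simp add: inner_diff_right)
    have "a (Suc k) = a k - 2 * \<gamma> k * inner (g (w k) (X k)) (X k - xstar) + (\<gamma> k)\<^sup>2 * Gk k"
      unfolding a_def Gk_def Xs by (rule norm_step)
    then have "(1 / \<gamma> k) * (a k - a (Suc k)) + \<gamma> k * Gk k = 2 * inner (g (w k) (X k)) (X k - xstar)"
      using gpos[of k] by (simp add: field_simps power2_eq_square)
    moreover have gen: "\<And>A I J F1 F2::real. A = 2*I \<Longrightarrow> F1 + J \<le> F2 \<Longrightarrow> J = -I \<Longrightarrow> 2*(F1-F2) \<le> A"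
      by simp
    ultimately show ?thesis using s i by blast
  qed
  define r where "r k = 1 / \<gamma> k" for k
  have rmono: "r k \<le> r (Suc k)" for k
  proof -
    have "r k = c k / p (Suc k)" "r (Suc k) = c (Suc k) / p (Suc (Suc k))" unfolding r_def \<gamma>_def by simp_all
    moreover have "c k / p (Suc k) \<le> c (Suc k) / p (Suc (Suc k))"
      using cmono[of k] pm[of "Suc k"] ppos[of "Suc (Suc k)"] cpos[of k]
      by (intro frac_le) auto
    ultimately show ?thesis by simp
  qed
  have rnn: "0 \<le> r k" for k unfolding r_def using gpos[of k] by simp
  have tel: "(\<Sum>k<K. r k * (a k - a (Suc k))) \<le> r (K - 1) * (D2 - a K)"
    using telesc[where r=r and a=a and K=K and M=D2, OF rmono rnn _ K] aD by blast
  have "r (K - 1) = c (K - 1) / p K" unfolding r_def \<gamma>_def using K by simp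
  also have "\<dots> \<le> c (K - 1) / (c0 * \<gamma>l)" using pb[of K] cpos[of "K-1"] c0 gl ppos[of K]
    by (intro divide_left_mono) auto
  also have "c (K - 1) = c0 * sqrt (real K)" unfolding c_def using K by (simp add: of_nat_diff)
  also have "c0 * sqrt (real K) / (c0 * \<gamma>l) = sqrt (real K) / \<gamma>l" using c0 by simp
  finally have rK: "r (K - 1) \<le> sqrt (real K) / \<gamma>l" .
  have "r (K - 1) * (D2 - a K) \<le> r (K - 1) * D2" using rnn[of "K-1"] unfolding a_def
    by (simp add: mult_left_mono)
  also have "\<dots> \<le> sqrt (real K) / \<gamma>l * D2" using mult_right_mono[OF rK D2nn] .
  finally have T1: "(\<Sum>k<K. r k * (a k - a (Suc k))) \<le> sqrt (real K) * (D2 / \<gamma>l)" using tel by simp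
  have gb: "\<gamma> k \<le> \<gamma>b / sqrt (real k + 1)" for k
  proof -
    have "\<gamma> k = p (Suc k) / (c0 * sqrt (real k + 1))" unfolding \<gamma>_def c_def by simp
    also have "\<dots> \<le> (c0 * \<gamma>b) / (c0 * sqrt (real k + 1))" using pb[of "Suc k"] c0
      by (intro divide_right_mono) auto
    also have "\<dots> = \<gamma>b / sqrt (real k + 1)" using c0 by simp
    finally show ?thesis .
  qed
  have "(\<Sum>k<K. \<gamma> k * Gk k) \<le> (\<Sum>k<K. G2 * \<gamma>b * (1 / sqrt (real k + 1)))"
  proof (rule sum_mono)
    fix k assume "k \<in> {..<K}"
    then have "Gk k \<le> G2" "0 \<le> Gk k" using GG unfolding Gk_def by auto
    then have "\<gamma> k * Gk k \<le> \<gamma> k * G2" using gpos[of k] by (simp add: mult_left_mono)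
    also have "\<dots> \<le> \<gamma>b / sqrt (real k + 1) * G2" using mult_right_mono[OF gb[of k] G2nn] .
    finally show "\<gamma> k * Gk k \<le> G2 * \<gamma>b * (1 / sqrt (real k + 1))" by (simp add: mult.commute)
  qed
  also have "\<dots> = G2 * \<gamma>b * (\<Sum>k<K. 1 / sqrt (real k + 1))" by (simp add: sum_distrib_left)
  also have "\<dots> \<le> G2 * \<gamma>b * (2 * sqrt (real K))"
    using sqrt_sum[of K] G2nn gl glb by (intro mult_left_mono) auto
  finally have T2: "(\<Sum>k<K. \<gamma> k * Gk k) \<le> sqrt (real K) * (2 * \<gamma>b * G2)" by (simp add: algebra_simps)
  have "2 * (\<Sum>k<K. F (w k) (X k) - F (w k) xstar) = (\<Sum>k<K. 2 * (F (w k) (X k) - F (w k) xstar))"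
    by (simp add: sum_distrib_left)
  also have "\<dots> \<le> (\<Sum>k<K. r k * (a k - a (Suc k)) + \<gamma> k * Gk k)"
    using step unfolding r_def by (intro sum_mono) auto
  also have "\<dots> \<le> sqrt (real K) * (D2 / \<gamma>l) + sqrt (real K) * (2 * \<gamma>b * G2)"
    using T1 T2 by (simp add: sum.distrib)
  finally have "2 * (\<Sum>k<K. F (w k) (X k) - F (w k) xstar) \<le> sqrt (real K) * (D2 / \<gamma>l + 2 * \<gamma>b * G2)"
    by (simp add: algebra_simps)
  moreover have "0 \<le> sqrt (real K) * (D2 / \<gamma>l + 2 * \<gamma>b * G2)"
    using D2nn G2nn gl glb by simp
  moreover have "\<And>u v::real. 2*u \<le> v \<Longrightarrow> 0 \<le> v \<Longrightarrow> u \<le> v" by (smt (verit))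
  ultimately show ?thesis by blast
qed



theorem corollary3:
  fixes fs :: "nat \<Rightarrow> real^'d \<Rightarrow> real"
    and n B K :: nat
    and lstar :: "nat set \<Rightarrow> real"
    and g :: "nat set \<Rightarrow> real^'d \<Rightarrow> real^'d"
    and xstar x0 :: "real^'d"
    and c0 \<gamma>l \<gamma>b :: real
  assumes "1 \<le> B" and "B \<le> n"
    and "\<forall>i<n. convex_on UNIV (fs i)"
    and "\<forall>i<n. bdd_below (range (fs i))"
    and "\<forall>y. fS fs {..<n} xstar \<le> fS fs {..<n} y"
    and "\<forall>S\<in>batches n B. lstar S \<le> (INF x. fS fs S x)"
    and "\<forall>S\<in>batches n B. \<forall>x. is_subgradient (fS fs S) x (g S x)"
    and "0 < c0" and "0 < \<gamma>l" and "\<gamma>l \<le> \<gamma>b"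
    and "1 \<le> K"
  shows
    "let X = decsps_x (fS fs) lstar g (\<lambda>k. c0 * sqrt (real k + 1)) \<gamma>l \<gamma>b x0;
         P = pmf_of_set (PiE {..<K} (\<lambda>_. batches n B));
         xbar = (\<lambda>w. (1 / real K) *\<^sub>R (\<Sum>k<K. X w k));
         D2 = (\<lambda>w. Max ((\<lambda>k. (norm (X w k - xstar))\<^sup>2) ` {..<K}));
         G2 = (\<lambda>w. Max ((\<lambda>k. (norm (g (w k) (X w k)))\<^sup>2) ` {..<K}))
     in measure_pmf.expectation P (\<lambda>w. fS fs {..<n} (xbar w) - fS fs {..<n} xstar)
        \<le> measure_pmf.expectation P (\<lambda>w. D2 w / \<gamma>l + 2 * \<gamma>b * G2 w) / sqrt (real K)"
proof -
  note B1 = assms(1) and Bn = assms(2) and cvx = assms(3) and sg = assms(7)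
    and c0 = assms(8) and gl = assms(9) and glb = assms(10) and K = assms(11)
  define c where "c = (\<lambda>k::nat. c0 * sqrt (real k + 1))"
  define X where "X = decsps_x (fS fs) lstar g c \<gamma>l \<gamma>b x0"
  define A where "A = batches n B"
  define PP where "PP = PiE {..<K} (\<lambda>_. A)"
  define f where "f = fS fs {..<n}"
  define xbar where "xbar = (\<lambda>w. (1 / real K) *\<^sub>R (\<Sum>k<K. X w k))"
  define D2 where "D2 = (\<lambda>w. Max ((\<lambda>k. (norm (X w k - xstar))\<^sup>2) ` {..<K}))"
  define G2 where "G2 = (\<lambda>w. Max ((\<lambda>k. (norm (g (w k) (X w k)))\<^sup>2) ` {..<K}))"
  define R where "R = (\<lambda>w. D2 w / \<gamma>l + 2 * \<gamma>b * G2 w)"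
  have Afin: "finite A" unfolding A_def by (rule batches_finite)
  have Ane: "A \<noteq> {}" unfolding A_def using Bn by (rule batches_ne)
  have cA: "real (card A) > 0" using Afin Ane by (simp add: card_gt_0_iff)
  have Pfin: "finite PP" unfolding PP_def using Afin by (intro finite_PiE) auto
  have Pne: "PP \<noteq> {}" unfolding PP_def using Ane by (simp add: PiE_eq_empty_iff)
  have Kpos: "real K > 0" using K by simp
  have E: "measure_pmf.expectation (pmf_of_set PP) h = (\<Sum>w\<in>PP. h w) / real (card PP)" for h :: "_ \<Rightarrow> real"
    using integral_pmf_of_set[OF Pne Pfin] by simp
  have wA: "\<forall>k<K. w k \<in> A" if "w \<in> PP" for w using that unfolding PP_def by auto
  have fcvx: "convex_on UNIV f"
  proof -
    have "f = (\<lambda>x. (\<Sum>i<n. fs i x) / real n)" unfolding f_def by (simp add: fS_def fun_eq_iff)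
    moreover have "convex_on UNIV (\<lambda>x. \<Sum>i<n. fs i x)" using cvx by (intro convex_on_sum_fun) auto
    ultimately show ?thesis by (simp add: convex_on_cdiv)
  qed
  have jensen: "f (xbar w) - f xstar \<le> (1 / real K) * (\<Sum>k<K. f (X w k) - f xstar)" for w
  proof -
    have "xbar w = (\<Sum>k<K. (1 / real K) *\<^sub>R X w k)" unfolding xbar_def by (simp add: scaleR_sum_right)
    moreover have "f (\<Sum>k<K. (1 / real K) *\<^sub>R X w k) \<le> (\<Sum>k<K. (1 / real K) * f (X w k))"
      using K Kpos by (intro convex_on_sum[OF _ _ fcvx]) (auto simp: lessThan_empty_iff)
    moreover have "(\<Sum>k<K. (1 / real K) * f (X w k)) - f xstar = (1 / real K) * (\<Sum>k<K. f (X w k) - f xstar)"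
    proof -
      have a: "(\<Sum>k<K. (1 / real K) * f (X w k)) = (1 / real K) * (\<Sum>k<K. f (X w k))" by (simp add: sum_distrib_left)
      have b: "(1 / real K) * (\<Sum>k<K. f (X w k) - f xstar) = (1 / real K) * (\<Sum>k<K. f (X w k)) - (1 / real K) * (real K * f xstar)"
        by (simp add: sum_subtractf right_diff_distrib)
      have d: "(1 / real K) * (real K * f xstar) = f xstar" using Kpos by simp
      show ?thesis unfolding a b d ..
    qed
    ultimately show ?thesis by simp
  qed
  have exch: "(\<Sum>w\<in>PP. f (X w k) - f xstar) = (\<Sum>w\<in>PP. fS fs (w k) (X w k) - fS fs (w k) xstar)"
    if "k < K" for k
  proof -
    have "(\<Sum>w\<in>PP. fS fs (w k) (X w k) - fS fs (w k) xstar) * real (card A)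
        = (\<Sum>w\<in>PP. \<Sum>S\<in>A. fS fs S (X w k) - fS fs S xstar)"
      unfolding PP_def
    proof (rule swap_coord[where \<Phi> = "\<lambda>S w. fS fs S (X w k) - fS fs S xstar"])
      show "k \<in> {..<K}" using that by simp
      show "finite A" by (rule Afin)
      fix S and w w' :: "nat \<Rightarrow> nat set"
      assume "\<forall>j\<in>{..<K} - {k}. w j = w' j"
      then have "\<forall>j<k. w j = w' j" using that by auto
      then have "X w k = X w' k" unfolding X_def decsps_x_def by (simp add: state_dep[of k w w'])
      then show "fS fs S (X w k) - fS fs S xstar = fS fs S (X w' k) - fS fs S xstar" by simp
    qed
    also have "\<dots> = (\<Sum>w\<in>PP. real (card A) * (f (X w k) - f xstar))"
      unfolding A_def f_def
      by (simp add: sum_subtractf avg_batches[OF B1 Bn] right_diff_distrib)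
    also have "\<dots> = (\<Sum>w\<in>PP. f (X w k) - f xstar) * real (card A)"
      by (simp add: sum_distrib_left mult.commute)
    finally show ?thesis using cA by simp
  qed
  have path: "(1 / real K) * (\<Sum>k<K. fS fs (w k) (X w k) - fS fs (w k) xstar) \<le> R w / sqrt (real K)"
    if "w \<in> PP" for w
  proof -
    have "(\<Sum>k<K. fS fs (w k) (X w k) - fS fs (w k) xstar) \<le> sqrt (real K) * R w"
      unfolding X_def R_def D2_def G2_def c_def
      by (rule pathwise[OF c0 gl glb K wA[OF that]]) (use sg A_def in auto)
    then have "(1 / real K) * (\<Sum>k<K. fS fs (w k) (X w k) - fS fs (w k) xstar) \<le> (1 / real K) * (sqrt (real K) * R w)"
      using Kpos by (intro mult_left_mono) auto
    also have "(1 / real K) * (sqrt (real K) * R w) = R w / sqrt (real K)"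
    proof -
      have "real K = sqrt (real K) * sqrt (real K)" using Kpos by simp
      then show ?thesis using Kpos by (metis (no_types, lifting) divide_divide_eq_left' mult.commute nonzero_mult_div_cancel_left real_sqrt_gt_0_iff times_divide_eq_left mult_1 order_less_irrefl)
    qed
    finally show ?thesis .
  qed
  have main: "(\<Sum>w\<in>PP. f (xbar w) - f xstar) \<le> (\<Sum>w\<in>PP. R w) / sqrt (real K)"
  proof -
    have "(\<Sum>w\<in>PP. f (xbar w) - f xstar) \<le> (\<Sum>w\<in>PP. (1 / real K) * (\<Sum>k<K. f (X w k) - f xstar))"
      using jensen by (intro sum_mono) auto
    also have "\<dots> = (1 / real K) * (\<Sum>k<K. \<Sum>w\<in>PP. f (X w k) - f xstar)"
      unfolding sum_distrib_left by (rule sum.swap)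
    also have "\<dots> = (1 / real K) * (\<Sum>k<K. \<Sum>w\<in>PP. fS fs (w k) (X w k) - fS fs (w k) xstar)"
      using exch by simp
    also have "\<dots> = (\<Sum>w\<in>PP. (1 / real K) * (\<Sum>k<K. fS fs (w k) (X w k) - fS fs (w k) xstar))"
      unfolding sum_distrib_left by (rule sum.swap)
    also have "\<dots> \<le> (\<Sum>w\<in>PP. R w / sqrt (real K))"
      using path by (intro sum_mono) auto
    also have "\<dots> = (\<Sum>w\<in>PP. R w) / sqrt (real K)" by (simp add: sum_divide_distrib)
    finally show ?thesis .
  qed
  have cP: "real (card PP) > 0" using Pfin Pne by (simp add: card_gt_0_iff)
  have "(\<Sum>w\<in>PP. f (xbar w) - f xstar) / real (card PP) \<le> ((\<Sum>w\<in>PP. R w) / sqrt (real K)) / real (card PP)"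
    using main cP by (intro divide_right_mono) auto
  also have "\<dots> = ((\<Sum>w\<in>PP. R w) / real (card PP)) / sqrt (real K)" by simp
  finally have fin: "(\<Sum>w\<in>PP. f (xbar w) - f xstar) / real (card PP) \<le> ((\<Sum>w\<in>PP. R w) / real (card PP)) / sqrt (real K)" .
  have fin2: "measure_pmf.expectation (pmf_of_set PP) (\<lambda>w. f (xbar w) - f xstar)
      \<le> measure_pmf.expectation (pmf_of_set PP) R / sqrt (real K)"
    unfolding E using fin .
  show ?thesis
    unfolding Let_def
    using fin2 unfolding PP_def A_def f_def xbar_def R_def D2_def G2_def X_def c_def .
qed

end
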